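(* For the CLT model, with negative seed set $N_0$ fixed, the negative influence reduction $\sigma_{NIR}(S)$, as a function of the positive seed set $S\subseteq V\setminus N_0$, is monotone and submodular; moreover $\sigma_{NIR}(\emptyset)=0$.
   Context: Weights: $G=(V,E)$ finite directed graph, each edge $(u,v)$ has weights $w^+_{uv},w^-_{uv}\ge 0$, with $w^\pm_{uv}=0$ for non-edges and $\sum_u w^+_{uv}\le1$, $\sum_u w^-_{uv}\le 1$ for all $v$. CLT process (two independent LT diffusions with negative dominance). Given disjoint seed sets $P_0$ (positive) and $N_0$ (negative), each node $v$ draws $\theta^+_v,\theta^-_v$ independently and uniformly from $[0,1]$. The positive diffusion is the LT process $R^+_0=P_0$, $R^+_t=R^+_{t-1}\cup\{v:\sum_{u\in R^+_{t-1}}w^+_{uv}\ge\theta^+_v\}$, and $\tau^+(v)=\min\{t: v\in R^+_t\}$ ($=\infty$ if no such $t$). The negative diffusion is defined identically from $N_0$, $w^-$, $\theta^-$, giving $\tau^-(v)$. A node $v$ is finally -active iff $\tau^-(v)<\infty$ and $\tau^-(v)\le\tau^+(v)$, and finally +active iff $\tau^+(v)<\infty$ and $\tau^+(v)<\tau^-(v)$. Influence blocking: for fixed thresholds, $IBS(S)$ is the set of nodes that are finally -active with seeds $(\emptyset,N_0)$ but not finally -active with seeds $(S,N_0)$; $\sigma_{NIR}(S)=\mathbb{E}_{\vec\theta^+,\vec\theta^-}|IBS(S)|$. A set function $f$ is monotone if $f(S)\le f(T)$ for $S\subseteq T$, and submodular if $f(S\cup\{x\})-f(S)\ge f(T\cup\{x\})-f(T)$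 for all $S\subseteq T$ and $x\notin T$ (here all sets are subsets of $V\setminus N_0$). *)

theory Defs
  imports "HOL-Probability.Probability"
begin

fun lt_reach :: "'v set \<Rightarrow> ('v \<Rightarrow> 'v \<Rightarrow> real) \<Rightarrow> ('v \<Rightarrow> real) \<Rightarrow> 'v set \<Rightarrow> nat \<Rightarrow> 'v set" where
  "lt_reach V w th A 0 = A"
| "lt_reach V w th A (Suc t) =
     lt_reach V w th A t \<union> {v \<in> V. (\<Sum>u\<in>lt_reach V w th A t. w u v) \<ge> th v}"

definition lt_time :: "'v set \<Rightarrow> ('v \<Rightarrow> 'v \<Rightarrow> real) \<Rightarrow> ('v \<Rightarrow> real) \<Rightarrow> 'v set \<Rightarrow> 'v \<Rightarrow> enat" where
  "lt_time V w th A v =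
     (if \<exists>t. v \<in> lt_reach V w th A t then enat (LEAST t. v \<in> lt_reach V w th A t) else \<infinity>)"

definition clt_neg_active ::
  "'v set \<Rightarrow> ('v \<Rightarrow> 'v \<Rightarrow> real) \<Rightarrow> ('v \<Rightarrow> 'v \<Rightarrow> real) \<Rightarrow> ('v \<Rightarrow> real) \<Rightarrow> ('v \<Rightarrow> real)
   \<Rightarrow> 'v set \<Rightarrow> 'v set \<Rightarrow> 'v \<Rightarrow> bool" where
  "clt_neg_active V wp wn thp thn P0 N0 v \<longleftrightarrow>
     lt_time V wn thn N0 v < \<infinity> \<and> lt_time V wn thn N0 v \<le> lt_time V wp thp P0 v"

definition IBS ::
  "'v set \<Rightarrow> ('v \<Rightarrow> 'v \<Rightarrow> real) \<Rightarrow> ('v \<Rightarrow> 'v \<Rightarrow> real) \<Rightarrow> 'v set \<Rightarrow> ('v \<Rightarrow> real) \<Rightarrow> ('v \<Rightarrow> real)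
   \<Rightarrow> 'v set \<Rightarrow> 'v set" where
  "IBS V wp wn N0 thp thn S =
     {v \<in> V. clt_neg_active V wp wn thp thn {} N0 v \<and> \<not> clt_neg_active V wp wn thp thn S N0 v}"

definition threshold_space :: "'v set \<Rightarrow> ('v \<Rightarrow> real) measure" where
  "threshold_space V = PiM V (\<lambda>_. uniform_measure lborel {0..1::real})"

definition sigma_NIR ::
  "'v set \<Rightarrow> ('v \<Rightarrow> 'v \<Rightarrow> real) \<Rightarrow> ('v \<Rightarrow> 'v \<Rightarrow> real) \<Rightarrow> 'v set \<Rightarrow> 'v set \<Rightarrow> real" where
  "sigma_NIR V wp wn N0 S =
     (\<integral>\<theta>. real (card (IBS V wp wn N0 (fst \<theta>) (snd \<theta>) S))
        \<partial>(threshold_space V \<Otimes>\<^sub>M threshold_space V))"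

end

theory Submission
  imports Defs
begin


abbreviation kill :: "'v \<Rightarrow> ('v \<Rightarrow> 'v \<Rightarrow> real) \<Rightarrow> ('v \<Rightarrow> 'v \<Rightarrow> real)" where
  "kill v w \<equiv> (\<lambda>a b. if a = v then 0 else w a b)"

fun fcov :: "'v set \<Rightarrow> ('v \<Rightarrow> 'v \<Rightarrow> real) \<Rightarrow> 'v \<Rightarrow> nat \<Rightarrow> 'v set \<Rightarrow> real" where
  "fcov V w v 0 S = (if v \<in> S then 1 else 0)"
| "fcov V w v (Suc k) S = (if v \<in> S then 1 else if v \<in> V then
      (\<Sum>u\<in>V. kill v w u v * fcov V (kill v w) u k S) else 0)"

lemma fcov_nonneg: "(\<And>a b. w a b \<ge> 0) \<Longrightarrow> 0 \<le> fcov V w v k S"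
  by (induction k arbitrary: w v) (auto intro!: sum_nonneg mult_nonneg_nonneg)

lemma kill_colsum:
  assumes "\<And>a b. w a b \<ge> 0" "\<And>v. v \<in> V \<Longrightarrow> (\<Sum>u\<in>V. w u v) \<le> 1" "v' \<in> V"
  shows "(\<Sum>u\<in>V. kill v w u v') \<le> 1"
proof -
  have "(\<Sum>u\<in>V. kill v w u v') \<le> (\<Sum>u\<in>V. w u v')"
    by (intro sum_mono) (use assms in auto)
  then show ?thesis using assms(2)[OF assms(3)] by linarith
qed

lemma fcov_le1:
  assumes "\<And>a b. w a b \<ge> 0" "\<And>v. v \<in> V \<Longrightarrow> (\<Sum>u\<in>V. w u v) \<le> 1"
  shows "fcov V w v k S \<le> 1"
  using assms
proof (induction k arbitrary: w v)
  case 0 then show ?case by auto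
next
  case (Suc k)
  have cs: "\<And>v'. v' \<in> V \<Longrightarrow> (\<Sum>u\<in>V. kill v w u v') \<le> 1"
  proof -
    fix v' assume "v' \<in> V"
    have "(\<Sum>u\<in>V. kill v w u v') \<le> (\<Sum>u\<in>V. w u v')"
      by (intro sum_mono) (use Suc.prems in auto)
    then show "(\<Sum>u\<in>V. kill v w u v') \<le> 1" using Suc.prems(2)[OF \<open>v' \<in> V\<close>] by linarith
  qed
  have "(\<Sum>u\<in>V. kill v w u v * fcov V (kill v w) u k S) \<le> (\<Sum>u\<in>V. kill v w u v * 1)"
    by (intro sum_mono mult_left_mono Suc.IH cs) (use Suc.prems in auto)
  also have "\<dots> \<le> (\<Sum>u\<in>V. w u v)" by (intro sum_mono) (use Suc.prems in auto)
  finally have "(\<Sum>u\<in>V. kill v w u v * fcov V (kill v w) u k S) \<le> (\<Sum>u\<in>V. w u v)" .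
  then show ?case using Suc.prems(2)[of v] by auto
qed

lemma fcov_mono:
  assumes "\<And>a b. w a b \<ge> 0" "\<And>v. v \<in> V \<Longrightarrow> (\<Sum>u\<in>V. w u v) \<le> 1" "S \<subseteq> T"
  shows "fcov V w v k S \<le> fcov V w v k T"
  using assms
proof (induction k arbitrary: w v)
  case 0 then show ?case by auto
next
  case (Suc k)
  have kc: "\<And>v'. v' \<in> V \<Longrightarrow> (\<Sum>u\<in>V. kill v w u v') \<le> 1"
    by (rule kill_colsum) (use Suc.prems in auto)
  have "(\<Sum>u\<in>V. kill v w u v * fcov V (kill v w) u k S) \<le> (\<Sum>u\<in>V. kill v w u v * fcov V (kill v w) u k T)"
    by (intro sum_mono mult_left_mono Suc.IH) (use Suc.prems kc in auto)
  moreover have "fcov V w v (Suc k) S \<le> 1"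
    by (rule fcov_le1) (use Suc.prems in auto)
  ultimately show ?case using Suc.prems by (auto split: if_splits)
qed

lemma fcov_submod:
  assumes "\<And>a b. w a b \<ge> 0" "S \<subseteq> T" "x \<notin> T" "\<And>v. v \<in> V \<Longrightarrow> (\<Sum>u\<in>V. w u v) \<le> 1"
  shows "fcov V w v k (insert x S) - fcov V w v k S \<ge> fcov V w v k (insert x T) - fcov V w v k T"
  using assms(1,4)
proof (induction k arbitrary: w v)
  case 0 then show ?case using assms by auto
next
  case (Suc k)
  have nn: "\<And>a b. kill v w a b \<ge> 0" using Suc.prems by auto
  have kc: "\<And>v'. v' \<in> V \<Longrightarrow> (\<Sum>u\<in>V. kill v w u v') \<le> 1"
    by (rule kill_colsum) (use Suc.prems in auto)
  consider "v \<in> S" | "v \<notin> S" "v \<in> T" | "v = x" "v \<notin> T" | "v \<notin> insert x T" by auto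
  then show ?case
  proof cases
    case 1 then show ?thesis using assms by auto
  next
    case 2
    have "fcov V w v (Suc k) S \<le> fcov V w v (Suc k) (insert x S)"
      by (rule fcov_mono) (use Suc.prems in auto)
    then show ?thesis using 2 by auto
  next
    case 3
    have "fcov V w v (Suc k) S \<le> fcov V w v (Suc k) T"
      by (rule fcov_mono) (use Suc.prems assms in auto)
    then show ?thesis using 3 by auto
  next
    case 4
    then have vS: "v \<notin> S" "v \<notin> insert x S" using assms by auto
    show ?thesis
    proof (cases "v \<in> V")
      case False then show ?thesis using 4 vS by simp
    next
      case True
      have "(\<Sum>u\<in>V. kill v w u v * fcov V (kill v w) u k (insert x T)) - (\<Sum>u\<in>V. kill v w u v * fcov V (kill v w) u k T)
         \<le> (\<Sum>u\<in>V. kill v w u v * fcov V (kill v w) u k (insert x S)) - (\<Sum>u\<in>V. kill v w u v * fcov V (kill v w) u k S)"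
        unfolding sum_subtractf[symmetric] right_diff_distrib[symmetric]
        by (intro sum_mono mult_left_mono Suc.IH) (use Suc.prems kc in auto)
      then show ?thesis using 4 vS True by simp
    qed
  qed
qed




lemma reach_Suc_sub: "lt_reach V w th A t \<subseteq> lt_reach V w th A (Suc t)"
  by auto

lemma reach_mono_t: "t \<le> t' \<Longrightarrow> lt_reach V w th A t \<subseteq> lt_reach V w th A t'"
  by (induction t' rule: dec_induct) (auto)

lemma reach_sub: "lt_reach V w th A t \<subseteq> A \<union> V"
  by (induction t) auto

lemma reach_seed_mono:
  assumes "A \<subseteq> B" "finite (B \<union> V)" "\<And>a b. w a b \<ge> 0"
  shows "lt_reach V w th A t \<subseteq> lt_reach V w th B t"
proof (induction t)
  case 0 then show ?case using assms by simp
next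
  case (Suc t)
  have s: "(\<Sum>u\<in>lt_reach V w th A t. w u x) \<le> (\<Sum>u\<in>lt_reach V w th B t. w u x)" for x
    by (rule sum_mono2) (use Suc reach_sub[of V w th B t] assms in \<open>auto intro: finite_subset\<close>)
  show ?case
  proof
    fix x assume "x \<in> lt_reach V w th A (Suc t)"
    then show "x \<in> lt_reach V w th B (Suc t)"
      using Suc s[of x] by (auto intro: order_trans)
  qed
qed




lemma reach_kill:
  "v \<in> lt_reach V w th A t \<longleftrightarrow> v \<in> lt_reach V (kill v w) th A t"
proof -
  have "(v \<notin> lt_reach V w th A t \<or> v \<notin> lt_reach V (kill v w) th A t) \<longrightarrow>
        lt_reach V w th A t = lt_reach V (kill v w) th A t" for t
  proof (induction t)
    case 0 then show ?case by simp
  next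
    case (Suc t)
    show ?case
    proof
      assume a: "v \<notin> lt_reach V w th A (Suc t) \<or> v \<notin> lt_reach V (kill v w) th A (Suc t)"
      then have "v \<notin> lt_reach V w th A t \<or> v \<notin> lt_reach V (kill v w) th A t" by auto
      with Suc have eq: "lt_reach V w th A t = lt_reach V (kill v w) th A t" by blast
      have nv: "v \<notin> lt_reach V w th A t" using a eq by auto
      have "(\<Sum>u\<in>lt_reach V w th A t. w u x) = (\<Sum>u\<in>lt_reach V (kill v w) th A t. kill v w u x)" for x
        unfolding eq[symmetric] by (rule sum.cong) (use nv in auto)
      then show "lt_reach V w th A (Suc t) = lt_reach V (kill v w) th A (Suc t)"
        using eq by simp
    qed
  qed
  then show ?thesis by blast
qed

lemma reach_char:
  assumes "finite (A \<union> V)" "\<And>a b. w a b \<ge> 0" "v \<notin> A"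
  shows "v \<in> lt_reach V w th A (Suc k) \<longleftrightarrow> v \<in> V \<and> th v \<le> (\<Sum>u\<in>lt_reach V w th A k. w u v)"
proof -
  have fin: "finite (lt_reach V w th A t)" for t
    using reach_sub[of V w th A t] assms(1) by (auto intro: finite_subset)
  have smono: "(\<Sum>u\<in>lt_reach V w th A k. w u v) \<le> (\<Sum>u\<in>lt_reach V w th A (Suc k). w u v)" for k
    by (rule sum_mono2[OF fin]) (use assms(2) in auto)
  have "v \<in> lt_reach V w th A k \<Longrightarrow> v \<in> V \<and> th v \<le> (\<Sum>u\<in>lt_reach V w th A k. w u v)" for k
  proof (induction k)
    case 0 then show ?case using assms by simp
  next
    case (Suc k)
    show ?case
    proof (cases "v \<in> lt_reach V w th A k")
      case True then show ?thesis using Suc.IH smono[of k] by fastforce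
    next
      case False then show ?thesis using Suc.prems smono[of k] by fastforce
    qed
  qed
  from this[of k] show ?thesis by auto
qed




lemma sum_remove_zero: "f v = 0 \<Longrightarrow> sum f (A - {v}) = sum f A"
  by (cases "finite A"; cases "v \<in> A") (auto simp: sum.remove)

lemma reach_indep:
  assumes "\<And>b. w v b = 0"
  shows "lt_reach V w (th(v:=y)) A k - {v} = lt_reach V w th A k - {v}"
proof (induction k)
  case 0 then show ?case by simp
next
  case (Suc k)
  have s: "(\<Sum>u\<in>lt_reach V w (th(v:=y)) A k. w u x) = (\<Sum>u\<in>lt_reach V w th A k. w u x)" for x
  proof -
    have "(\<Sum>u\<in>lt_reach V w (th(v:=y)) A k. w u x) = (\<Sum>u\<in>lt_reach V w (th(v:=y)) A k - {v}. w u x)"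
      by (rule sum_remove_zero[symmetric]) (use assms in simp)
    also have "\<dots> = (\<Sum>u\<in>lt_reach V w th A k - {v}. w u x)" by (simp only: Suc)
    also have "\<dots> = (\<Sum>u\<in>lt_reach V w th A k. w u x)"
      by (rule sum_remove_zero) (use assms in simp)
    finally show ?thesis .
  qed
  show ?case
  proof (rule set_eqI)
    fix x
    have m: "x \<noteq> v \<Longrightarrow> x \<in> lt_reach V w (th(v:=y)) A k \<longleftrightarrow> x \<in> lt_reach V w th A k"
      using Suc by blast
    show "x \<in> lt_reach V w (th(v:=y)) A (Suc k) - {v} \<longleftrightarrow> x \<in> lt_reach V w th A (Suc k) - {v}"
      using m by (cases "x = v") (auto simp: s)
  qed
qed




lemma time_le: "lt_time V w th A v \<le> enat m \<longleftrightarrow> v \<in> lt_reach V w th A m"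
proof
  assume a: "lt_time V w th A v \<le> enat m"
  show "v \<in> lt_reach V w th A m"
  proof (cases "\<exists>t. v \<in> lt_reach V w th A t")
    case True
    then have "lt_time V w th A v = enat (LEAST t. v \<in> lt_reach V w th A t)"
      unfolding lt_time_def by simp
    with a have le: "(LEAST t. v \<in> lt_reach V w th A t) \<le> m" by simp
    have "v \<in> lt_reach V w th A (LEAST t. v \<in> lt_reach V w th A t)"
      using True by (rule LeastI_ex)
    then show ?thesis using reach_mono_t[OF le, where V=V and w=w and th=th and A=A] by blast
  next
    case False
    then have "lt_time V w th A v = \<infinity>" unfolding lt_time_def by simp
    with a show ?thesis by simp
  qed
next
  assume a: "v \<in> lt_reach V w th A m"
  then have le: "(LEAST t. v \<in> lt_reach V w th A t) \<le> m" by (rule Least_le)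
  have "lt_time V w th A v = enat (LEAST t. v \<in> lt_reach V w th A t)"
    using a unfolding lt_time_def by auto
  then show "lt_time V w th A v \<le> enat m" using le by simp
qed

lemma time_eq_Suc: "lt_time V w th A v = enat (Suc n) \<longleftrightarrow>
    v \<in> lt_reach V w th A (Suc n) \<and> v \<notin> lt_reach V w th A n"
proof -
  have *: "x = enat (Suc n) \<longleftrightarrow> x \<le> enat (Suc n) \<and> \<not> x \<le> enat n" for x :: enat
    by (cases x) auto
  show ?thesis unfolding * time_le ..
qed



lemma IBS_char:
  "v \<in> IBS V wp wn N0 thp thn S \<longleftrightarrow> v \<in> V \<and> (\<exists>n. lt_time V wn thn N0 v = enat (Suc n)
       \<and> v \<in> lt_reach V wp thp S n \<and> v \<notin> lt_reach V wp thp {} n)"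
proof -
  have *: "x < \<infinity> \<and> x \<le> a \<and> \<not> (x < \<infinity> \<and> x \<le> b) \<longleftrightarrow>
     (\<exists>n. x = enat (Suc n) \<and> b \<le> enat n \<and> \<not> a \<le> enat n)" for x a b :: enat
  proof (cases x)
    case (enat m)
    have l1: "(b::enat) < enat (Suc n) \<longleftrightarrow> b \<le> enat n" for b n by (cases b) auto
    have l2: "enat (Suc n) \<le> (a::enat) \<longleftrightarrow> \<not> a \<le> enat n" for a n by (cases a) auto
    show ?thesis
    proof (cases m)
      case 0 then show ?thesis using enat by (auto simp: enat_0_iff zero_enat_def[symmetric])
    next
      case (Suc n) then show ?thesis using enat l1[of b n] l2[of n a] by (auto simp: not_le)
    qed
  qed simp
  note i = *[of "lt_time V wn thn N0 v" "lt_time V wp thp {} v" "lt_time V wp thp S v", unfolded time_le]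
  show ?thesis unfolding IBS_def clt_neg_active_def mem_Collect_eq using i by blast
qed




abbreviation U :: "real measure" where "U \<equiv> uniform_measure lborel {0..1::real}"

lemma prob_U: "prob_space U"
  by (rule prob_space_uniform_measure) auto

lemma PPS: "product_prob_space (\<lambda>_. U)"
proof -
  interpret U: prob_space U by (rule prob_U)
  show ?thesis
    by unfold_locales
qed

lemma prob_TS: "prob_space (threshold_space V)"
  unfolding threshold_space_def by (rule prob_space_PiM) (rule prob_U)

lemma comp_meas: "u \<in> V \<Longrightarrow> (\<lambda>th. th u) \<in> borel_measurable (threshold_space V)"
  unfolding threshold_space_def
  using measurable_component_singleton[of u V "\<lambda>_. U"]
  by (simp add: measurable_cong_sets[OF refl sets_uniform_measure[symmetric]] sets_lborel)

lemma reach_meas: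
  assumes "finite (A \<union> V)"
  shows "Measurable.pred (threshold_space V) (\<lambda>th. u \<in> lt_reach V w th A k)"
proof (induction k arbitrary: u)
  case 0 then show ?case by simp
next
  case (Suc k)
  have eq: "(\<Sum>a\<in>lt_reach V w th A k. w a u) = (\<Sum>a\<in>A \<union> V. if a \<in> lt_reach V w th A k then w a u else 0)" for th
    using sum.inter_restrict[OF assms, of "\<lambda>a. w a u" "lt_reach V w th A k"] reach_sub[of V w th A k]
    by (simp add: Int_absorb1)
  have m: "(\<lambda>th. \<Sum>a\<in>A \<union> V. if a \<in> lt_reach V w th A k then w a u else 0) \<in> borel_measurable (threshold_space V)"
    by (intro borel_measurable_sum measurable_If) (auto intro: predE Suc.IH)
  show ?case
  proof (cases "u \<in> V")
    case True
    have "Measurable.pred (threshold_space V) (\<lambda>th. u \<in> lt_reach V w th A k \<or>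
        th u \<le> (\<Sum>a\<in>A \<union> V. if a \<in> lt_reach V w th A k then w a u else 0))"
    proof -
      have p1: "Measurable.pred (threshold_space V) (\<lambda>th. th u \<le> (\<Sum>a\<in>A \<union> V. if a \<in> lt_reach V w th A k then w a u else 0))"
        unfolding pred_def by (rule borel_measurable_le[OF comp_meas[OF True] m])
      show ?thesis using p1 Suc.IH by measurable
    qed
    then show ?thesis using True by (simp add: eq)
  next
    case False
    then show ?thesis using Suc.IH by simp
  qed
qed




lemma unif_le:
  assumes "0 \<le> c" "c \<le> (1::real)"
  shows "(\<integral>y. (if y \<le> c then 1 else 0) \<partial>U) = c"
proof -
  have "(\<integral>y. (if y \<le> c then 1 else 0) \<partial>U) = (\<integral>y. indicator {..c} y \<partial>U)"
    by (rule Bochner_Integration.integral_cong) (auto simp: indicator_def)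
  also have "\<dots> = measure U {..c}" by simp
  also have "\<dots> = measure lborel ({0..1} \<inter> {..c}) / measure lborel {0..1::real}"
    by (subst measure_uniform_measure) auto
  also have "{0..1} \<inter> {..c} = {0..c}" using assms by auto
  finally show ?thesis using assms by simp
qed

lemma split_int:
  fixes f :: "_ \<Rightarrow> real"
  assumes "finite V" "u \<in> V" "integrable (threshold_space V) f"
  shows "integral\<^sup>L (threshold_space V) f = (\<integral>x. (\<integral>y. f (x(u:=y)) \<partial>U) \<partial>PiM (V - {u}) (\<lambda>_. U))"
proof -
  interpret PP: product_prob_space "\<lambda>_. U" V by (rule PPS)
  have eq: "threshold_space V = PiM (insert u (V - {u})) (\<lambda>_. U)"
    using assms(2) by (simp add: threshold_space_def insert_absorb)
  have fi: "integrable (PiM (insert u (V - {u})) (\<lambda>_. U)) f" using assms(3) eq by simp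
  show ?thesis unfolding eq
    using PP.product_integral_insert[of "V - {u}" u f] assms fi by simp
qed

lemma integ_bounded:
  assumes "f \<in> borel_measurable (threshold_space V)" "\<And>x. \<bar>f x\<bar> \<le> B"
  shows "integrable (threshold_space V) (f :: _ \<Rightarrow> real)"
proof -
  interpret prob_space "threshold_space V" by (rule prob_TS)
  show ?thesis by (rule integrable_const_bound[where B=B]) (use assms in auto)
qed




lemma indic_meas:
  assumes "finite V" "A \<subseteq> V"
  shows "(\<lambda>th. if a \<in> lt_reach V w th A k then (c::real) else 0) \<in> borel_measurable (threshold_space V)"
proof -
  have "finite (A \<union> V)" using assms finite_subset by auto
  then show ?thesis by (intro measurable_If predE reach_meas) auto
qed

lemma PL:
  assumes finV: "finite V" and AV: "A \<subseteq> V"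
  shows "(\<And>a b. w a b \<ge> 0) \<Longrightarrow> (\<And>v. v \<in> V \<Longrightarrow> (\<Sum>u\<in>V. w u v) \<le> 1) \<Longrightarrow>
    (\<integral>th. (if u \<in> lt_reach V w th A k then 1 else 0) \<partial>threshold_space V) = fcov V w u k A"
proof (induction k arbitrary: w u)
  interpret T: prob_space "threshold_space V" by (rule prob_TS)
  case 0 then show ?case by (simp add: T.prob_space)
next
  interpret T: prob_space "threshold_space V" by (rule prob_TS)
  case (Suc k)
  have finAV: "finite (A \<union> V)" using finV AV finite_subset by auto
  consider "u \<in> A" | "u \<notin> A" "u \<notin> V" | "u \<notin> A" "u \<in> V" by auto
  then show ?case
  proof cases
    case 1
    then have "u \<in> lt_reach V w th A (Suc k)" for th
      using reach_mono_t[of 0 "Suc k" V w th A] by auto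
    then show ?thesis using 1 by (simp add: T.prob_space)
  next
    case 2
    then have "u \<notin> lt_reach V w th A (Suc k)" for th
      using reach_sub[of V w th A "Suc k"] by auto
    then show ?thesis using 2 by simp
  next
    case 3
    define w' where "w' = kill u w"
    have w'nn: "\<And>a b. w' a b \<ge> 0" using Suc.prems unfolding w'_def by auto
    have w'cs: "\<And>v. v \<in> V \<Longrightarrow> (\<Sum>a\<in>V. w' a v) \<le> 1"
      unfolding w'_def by (rule kill_colsum) (use Suc.prems in auto)
    define X where "X th = (\<Sum>a\<in>V. if a \<in> lt_reach V w' th A k then w' a u else 0)" for th
    have eq1: "u \<in> lt_reach V w th A (Suc k) \<longleftrightarrow> th u \<le> X th" for th
    proof -
      have "u \<in> lt_reach V w th A (Suc k) \<longleftrightarrow> u \<in> lt_reach V w' th A (Suc k)"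
        unfolding w'_def by (rule reach_kill)
      also have "\<dots> \<longleftrightarrow> u \<in> V \<and> th u \<le> (\<Sum>a\<in>lt_reach V w' th A k. w' a u)"
        by (rule reach_char[OF finAV w'nn 3(1)])
      also have "(\<Sum>a\<in>lt_reach V w' th A k. w' a u) = X th"
        unfolding X_def using sum.inter_restrict[OF finV, of "\<lambda>a. w' a u" "lt_reach V w' th A k"]
          reach_sub[of V w' th A k] AV by (simp add: Int_absorb1 Un_absorb1)
      finally show ?thesis using 3 by simp
    qed
    have Xind: "X (th(u:=y)) = X th" for th y
      unfolding X_def
    proof (rule sum.cong[OF refl])
      fix a assume "a \<in> V"
      show "(if a \<in> lt_reach V w' (th(u:=y)) A k then w' a u else 0) = (if a \<in> lt_reach V w' th A k then w' a u else 0)"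
      proof (cases "a = u")
        case True then show ?thesis unfolding w'_def by simp
      next
        case False
        have "lt_reach V w' (th(u:=y)) A k - {u} = lt_reach V w' th A k - {u}"
          by (rule reach_indep) (simp add: w'_def)
        then have "a \<in> lt_reach V w' (th(u:=y)) A k \<longleftrightarrow> a \<in> lt_reach V w' th A k" using False by blast
        then show ?thesis by simp
      qed
    qed
    have X0: "0 \<le> X th" for th unfolding X_def using w'nn by (auto intro: sum_nonneg)
    have X1: "X th \<le> 1" for th
    proof -
      have "X th \<le> (\<Sum>a\<in>V. w' a u)" unfolding X_def by (rule sum_mono) (use w'nn in auto)
      then show ?thesis using w'cs[OF 3(2)] by linarith
    qed
    have Xm: "X \<in> borel_measurable (threshold_space V)"
      unfolding X_def[abs_def] by (intro borel_measurable_sum indic_meas[OF finV AV])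
    have fm: "(\<lambda>th. if th u \<le> X th then 1 else (0::real)) \<in> borel_measurable (threshold_space V)"
      by (rule measurable_If) (auto intro: borel_measurable_le comp_meas[OF 3(2)] Xm)
    have fi: "integrable (threshold_space V) (\<lambda>th. if th u \<le> X th then 1 else (0::real))"
      by (rule integ_bounded[OF fm, where B=1]) auto
    have Xi: "integrable (threshold_space V) X"
      by (rule integ_bounded[OF Xm, where B=1]) (use X0 X1 in auto)
    interpret UU: prob_space U by (rule prob_U)
    have "(\<integral>th. (if u \<in> lt_reach V w th A (Suc k) then 1 else 0) \<partial>threshold_space V)
        = (\<integral>th. (if th u \<le> X th then 1 else (0::real)) \<partial>threshold_space V)"
      by (simp only: eq1)
    also have "\<dots> = (\<integral>x. (\<integral>y. (if y \<le> X x then 1 else (0::real)) \<partial>U) \<partial>PiM (V - {u}) (\<lambda>_. U))"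
      using split_int[OF finV 3(2) fi] by (simp add: Xind)
    also have "\<dots> = (\<integral>x. (\<integral>y. X (x(u:=y)) \<partial>U) \<partial>PiM (V - {u}) (\<lambda>_. U))"
      by (simp add: Xind unif_le X0 X1)
    also have "\<dots> = integral\<^sup>L (threshold_space V) X"
      using split_int[OF finV 3(2) Xi] by (simp add: Xind)
    also have "\<dots> = (\<Sum>a\<in>V. \<integral>th. (if a \<in> lt_reach V w' th A k then w' a u else 0) \<partial>threshold_space V)"
      unfolding X_def
      by (rule Bochner_Integration.integral_sum)
         (auto intro!: integ_bounded[where B="\<bar>w' a u\<bar>" for a] indic_meas[OF finV AV])
    also have "\<dots> = (\<Sum>a\<in>V. w' a u * fcov V w' a k A)"
    proof (rule sum.cong[OF refl])
      fix a assume "a \<in> V"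
      have "(\<integral>th. (if a \<in> lt_reach V w' th A k then w' a u else 0) \<partial>threshold_space V)
          = (\<integral>th. w' a u * (if a \<in> lt_reach V w' th A k then 1 else 0) \<partial>threshold_space V)"
        by (rule Bochner_Integration.integral_cong) auto
      also have "\<dots> = w' a u * (\<integral>th. (if a \<in> lt_reach V w' th A k then 1 else 0) \<partial>threshold_space V)"
        by simp
      also have "\<dots> = w' a u * fcov V w' a k A"
        using Suc.IH[OF w'nn w'cs] by simp
      finally show "(\<integral>th. (if a \<in> lt_reach V w' th A k then w' a u else 0) \<partial>threshold_space V) = w' a u * fcov V w' a k A" .
    qed
    also have "\<dots> = fcov V w u (Suc k) A"
      using 3 unfolding w'_def by simp
    finally show ?thesis .
  qed
qed




definition nsel :: "'v set \<Rightarrow> ('v \<Rightarrow> 'v \<Rightarrow> real) \<Rightarrow> ('v \<Rightarrow> real) \<Rightarrow> 'v set \<Rightarrow> 'v \<Rightarrow> nat" where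
  "nsel V wn thn N0 v = (SOME n. lt_time V wn thn N0 v = enat (Suc n))"

definition gval where
  "gval V wp wn N0 thn v S = (if \<exists>n. lt_time V wn thn N0 v = enat (Suc n) then
      fcov V wp v (nsel V wn thn N0 v) S - fcov V wp v (nsel V wn thn N0 v) {} else 0)"

lemma card_as_sum:
  assumes "finite V" "X \<subseteq> V"
  shows "real (card X) = (\<Sum>v\<in>V. if v \<in> X then 1 else 0)"
proof -
  have "(\<Sum>v\<in>V. if v \<in> X then (1::real) else 0) = (\<Sum>v\<in>V \<inter> X. 1)"
    using sum.inter_restrict[OF assms(1), of "\<lambda>_. (1::real)" X] by simp
  also have "V \<inter> X = X" using assms by auto
  finally show ?thesis by simp
qed

lemma IBS_sub: "IBS V wp wn N0 thp thn S \<subseteq> V"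
  unfolding IBS_def by auto

lemma inner:
  assumes finV: "finite V" and SV: "S \<subseteq> V" and nn: "\<And>a b. wp a b \<ge> 0"
    and cs: "\<And>v. v \<in> V \<Longrightarrow> (\<Sum>u\<in>V. wp u v) \<le> 1"
  shows "(\<integral>thp. real (card (IBS V wp wn N0 thp thn S)) \<partial>threshold_space V) = (\<Sum>v\<in>V. gval V wp wn N0 thn v S)"
proof -
  define h where "h v thp = (if \<exists>n. lt_time V wn thn N0 v = enat (Suc n) then
      (if v \<in> lt_reach V wp thp S (nsel V wn thn N0 v) then 1 else 0)
      - (if v \<in> lt_reach V wp thp {} (nsel V wn thn N0 v) then 1 else (0::real)) else 0)" for v thp
  have hx: "(if v \<in> IBS V wp wn N0 thp thn S then 1 else 0) = h v thp" if v: "v \<in> V" for v thp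
  proof (cases "\<exists>n. lt_time V wn thn N0 v = enat (Suc n)")
    case True
    then have ns: "lt_time V wn thn N0 v = enat (Suc (nsel V wn thn N0 v))"
      unfolding nsel_def by (rule someI_ex)
    have sub: "lt_reach V wp thp {} n \<subseteq> lt_reach V wp thp S n" for n
      by (rule reach_seed_mono) (use finV SV nn finite_subset in auto)
    have "v \<in> IBS V wp wn N0 thp thn S \<longleftrightarrow> v \<in> lt_reach V wp thp S (nsel V wn thn N0 v)
        \<and> v \<notin> lt_reach V wp thp {} (nsel V wn thn N0 v)"
      unfolding IBS_char using v ns by auto
    then show ?thesis unfolding h_def using True sub by auto
  next
    case False
    then show ?thesis unfolding h_def IBS_char by auto
  qed
  have hm: "h v \<in> borel_measurable (threshold_space V)" for v
    unfolding h_def[abs_def]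
    by (cases "\<exists>n. lt_time V wn thn N0 v = enat (Suc n)")
       (simp_all add: borel_measurable_diff indic_meas[OF finV SV] indic_meas[OF finV, of "{}"])
  have hi: "integrable (threshold_space V) (h v)" for v
    by (rule integ_bounded[OF hm, where B=1]) (auto simp: h_def)
  have "(\<integral>thp. real (card (IBS V wp wn N0 thp thn S)) \<partial>threshold_space V) = (\<integral>thp. (\<Sum>v\<in>V. h v thp) \<partial>threshold_space V)"
    by (rule Bochner_Integration.integral_cong[OF refl])
       (simp add: card_as_sum[OF finV IBS_sub] hx)
  also have "\<dots> = (\<Sum>v\<in>V. \<integral>thp. h v thp \<partial>threshold_space V)"
    by (rule Bochner_Integration.integral_sum) (rule hi)
  also have "\<dots> = (\<Sum>v\<in>V. gval V wp wn N0 thn v S)"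
  proof (rule sum.cong[OF refl])
    fix v assume "v \<in> V"
    show "(\<integral>thp. h v thp \<partial>threshold_space V) = gval V wp wn N0 thn v S"
    proof (cases "\<exists>n. lt_time V wn thn N0 v = enat (Suc n)")
      case True
      have "(\<integral>thp. h v thp \<partial>threshold_space V) =
        (\<integral>thp. (if v \<in> lt_reach V wp thp S (nsel V wn thn N0 v) then 1 else 0) \<partial>threshold_space V)
        - (\<integral>thp. (if v \<in> lt_reach V wp thp {} (nsel V wn thn N0 v) then 1 else (0::real)) \<partial>threshold_space V)"
        unfolding h_def using True
        by (simp add: Bochner_Integration.integral_diff integ_bounded[where B=1] indic_meas[OF finV SV] indic_meas[OF finV, of "{}"])
      also have "\<dots> = gval V wp wn N0 thn v S"
        unfolding gval_def using True PL[OF finV SV nn cs] PL[OF finV _ nn cs, of "{}"] by simp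
      finally show ?thesis .
    next
      case False then show ?thesis unfolding h_def gval_def by simp
    qed
  qed
  finally show ?thesis .
qed




lemma IBS_char2:
  "v \<in> IBS V wp wn N0 thp thn S \<longleftrightarrow> v \<in> V \<and> (\<exists>n. (v \<in> lt_reach V wn thn N0 (Suc n) \<and> v \<notin> lt_reach V wn thn N0 n)
       \<and> v \<in> lt_reach V wp thp S n \<and> v \<notin> lt_reach V wp thp {} n)"
  unfolding IBS_char time_eq_Suc ..

lemma sigma_eq:
  assumes finV: "finite V" and SV: "S \<subseteq> V" and nn: "\<And>a b. wp a b \<ge> 0"
    and cs: "\<And>v. v \<in> V \<Longrightarrow> (\<Sum>u\<in>V. wp u v) \<le> 1" and N0V: "N0 \<subseteq> V"
  shows "sigma_NIR V wp wn N0 S = (\<integral>thn. (\<Sum>v\<in>V. gval V wp wn N0 thn v S) \<partial>threshold_space V)"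
    and "integrable (threshold_space V) (\<lambda>thn. \<Sum>v\<in>V. gval V wp wn N0 thn v S)"
proof -
  let ?P = "threshold_space V"
  interpret T: prob_space ?P by (rule prob_TS)
  interpret PP: pair_prob_space ?P ?P by unfold_locales
  define f where "f thp thn = real (card (IBS V wp wn N0 thp thn S))" for thp thn
  have fin1: "finite (S \<union> V)" "finite ({} \<union> V)" "finite (N0 \<union> V)"
    using finV SV N0V finite_subset by auto
  have pm: "Measurable.pred (?P \<Otimes>\<^sub>M ?P) (\<lambda>x. v \<in> IBS V wp wn N0 (fst x) (snd x) S)" for v
  proof -
    have a: "Measurable.pred (?P \<Otimes>\<^sub>M ?P) (\<lambda>x. v \<in> lt_reach V wn (snd x) N0 m)" for m
      by (rule measurable_compose[OF measurable_snd reach_meas[OF fin1(3)]])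
    have b: "Measurable.pred (?P \<Otimes>\<^sub>M ?P) (\<lambda>x. v \<in> lt_reach V wp (fst x) S m)" for m
      by (rule measurable_compose[OF measurable_fst reach_meas[OF fin1(1)]])
    have c: "Measurable.pred (?P \<Otimes>\<^sub>M ?P) (\<lambda>x. v \<in> lt_reach V wp (fst x) {} m)" for m
      by (rule measurable_compose[OF measurable_fst reach_meas[OF fin1(2)]])
    show ?thesis unfolding IBS_char2
      using a b c by measurable
  qed
  have fm: "(\<lambda>x. f (fst x) (snd x)) \<in> borel_measurable (?P \<Otimes>\<^sub>M ?P)"
    unfolding f_def card_as_sum[OF finV IBS_sub]
    by (intro borel_measurable_sum measurable_If predE pm) auto
  have fi: "integrable (?P \<Otimes>\<^sub>M ?P) (case_prod f)"
  proof -
    have "integrable (?P \<Otimes>\<^sub>M ?P) (\<lambda>x. f (fst x) (snd x))"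
    proof (rule PP.integrable_const_bound[where B="real (card V)"])
      show "AE x in ?P \<Otimes>\<^sub>M ?P. norm (f (fst x) (snd x)) \<le> real (card V)"
        unfolding f_def using card_mono[OF finV IBS_sub] by auto
    qed (rule fm)
    then show ?thesis by (simp add: case_prod_beta')
  qed
  have inn: "(\<integral>thp. f thp thn \<partial>?P) = (\<Sum>v\<in>V. gval V wp wn N0 thn v S)" for thn
    unfolding f_def by (rule inner[OF finV SV nn cs])
  have "sigma_NIR V wp wn N0 S = integral\<^sup>L (?P \<Otimes>\<^sub>M ?P) (case_prod f)"
    unfolding sigma_NIR_def f_def by (simp add: case_prod_beta')
  also have "\<dots> = (\<integral>thn. (\<integral>thp. f thp thn \<partial>?P) \<partial>?P)"
    by (rule PP.integral_snd[OF fi, symmetric])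
  finally show "sigma_NIR V wp wn N0 S = (\<integral>thn. (\<Sum>v\<in>V. gval V wp wn N0 thn v S) \<partial>?P)"
    by (simp add: inn)
  show "integrable ?P (\<lambda>thn. \<Sum>v\<in>V. gval V wp wn N0 thn v S)"
    using PP.integrable_snd[OF fi] by (simp add: inn)
qed




lemma gval_mono:
  assumes "\<And>a b. wp a b \<ge> 0" "\<And>v. v \<in> V \<Longrightarrow> (\<Sum>u\<in>V. wp u v) \<le> 1" "S \<subseteq> T"
  shows "gval V wp wn N0 thn v S \<le> gval V wp wn N0 thn v T"
  unfolding gval_def using fcov_mono[OF assms] by auto

lemma gval_submod:
  assumes "\<And>a b. wp a b \<ge> 0" "\<And>v. v \<in> V \<Longrightarrow> (\<Sum>u\<in>V. wp u v) \<le> 1" "S \<subseteq> T" "x \<notin> T"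
  shows "gval V wp wn N0 thn v (insert x S) - gval V wp wn N0 thn v S
     \<ge> gval V wp wn N0 thn v (insert x T) - gval V wp wn N0 thn v T"
  unfolding gval_def using fcov_submod[OF assms(1,3,4,2)] by auto

theorem theorem2:
  fixes V :: "'v set" and E :: "('v \<times> 'v) set"
    and wp wn :: "'v \<Rightarrow> 'v \<Rightarrow> real" and N0 :: "'v set"
  assumes finV: "finite V"
    and E_sub: "E \<subseteq> V \<times> V"
    and wp_nonneg: "\<And>u v. wp u v \<ge> 0"
    and wn_nonneg: "\<And>u v. wn u v \<ge> 0"
    and wp_edges: "\<And>u v. (u, v) \<notin> E \<Longrightarrow> wp u v = 0"
    and wn_edges: "\<And>u v. (u, v) \<notin> E \<Longrightarrow> wn u v = 0"
    and wp_sum: "\<And>v. v \<in> V \<Longrightarrow> (\<Sum>u\<in>V. wp u v) \<le> 1"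
    and wn_sum: "\<And>v. v \<in> V \<Longrightarrow> (\<Sum>u\<in>V. wn u v) \<le> 1"
    and N0_sub: "N0 \<subseteq> V"
  shows "(\<forall>S T. S \<subseteq> T \<and> T \<subseteq> V - N0 \<longrightarrow> sigma_NIR V wp wn N0 S \<le> sigma_NIR V wp wn N0 T)
       \<and> (\<forall>S T x. S \<subseteq> T \<and> T \<subseteq> V - N0 \<and> x \<in> V - N0 \<and> x \<notin> T \<longrightarrow>
            sigma_NIR V wp wn N0 (insert x S) - sigma_NIR V wp wn N0 S
              \<ge> sigma_NIR V wp wn N0 (insert x T) - sigma_NIR V wp wn N0 T)
       \<and> sigma_NIR V wp wn N0 {} = 0"
proof (intro conjI allI impI)
  let ?P = "threshold_space V"
  let ?G = "\<lambda>S thn. \<Sum>v\<in>V. gval V wp wn N0 thn v S"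
  have se1: "\<And>S. S \<subseteq> V \<Longrightarrow> sigma_NIR V wp wn N0 S = (\<integral>thn. ?G S thn \<partial>?P)"
    by (rule sigma_eq(1)) (use finV wp_nonneg wp_sum N0_sub in auto)
  have se2: "\<And>S. S \<subseteq> V \<Longrightarrow> integrable ?P (?G S)"
    by (rule sigma_eq(2)) (use finV wp_nonneg wp_sum N0_sub in auto)
  fix S T assume a: "S \<subseteq> T \<and> T \<subseteq> V - N0"
  then have SV: "S \<subseteq> V" and TV: "T \<subseteq> V" by auto
  show "sigma_NIR V wp wn N0 S \<le> sigma_NIR V wp wn N0 T"
  proof -
    have e1: "sigma_NIR V wp wn N0 S = (\<integral>thn. ?G S thn \<partial>?P)" by (rule se1[OF SV])
    have e2: "sigma_NIR V wp wn N0 T = (\<integral>thn. ?G T thn \<partial>?P)" by (rule se1[OF TV])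
    have "(\<integral>thn. ?G S thn \<partial>?P) \<le> (\<integral>thn. ?G T thn \<partial>?P)"
      apply (rule Bochner_Integration.integral_mono)
        apply (rule se2[OF SV])
       apply (rule se2[OF TV])
      apply (rule sum_mono, rule gval_mono)
      using a wp_nonneg wp_sum by auto
    then show ?thesis using e1 e2 by simp
  qed
next
  let ?P = "threshold_space V"
  let ?G = "\<lambda>S thn. \<Sum>v\<in>V. gval V wp wn N0 thn v S"
  have se1: "\<And>S. S \<subseteq> V \<Longrightarrow> sigma_NIR V wp wn N0 S = (\<integral>thn. ?G S thn \<partial>?P)"
    by (rule sigma_eq(1)) (use finV wp_nonneg wp_sum N0_sub in auto)
  have se2: "\<And>S. S \<subseteq> V \<Longrightarrow> integrable ?P (?G S)"
    by (rule sigma_eq(2)) (use finV wp_nonneg wp_sum N0_sub in auto)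
  fix S T x assume a: "S \<subseteq> T \<and> T \<subseteq> V - N0 \<and> x \<in> V - N0 \<and> x \<notin> T"
  then have V: "S \<subseteq> V" "T \<subseteq> V" "insert x S \<subseteq> V" "insert x T \<subseteq> V" by auto
  have "0 \<le> (\<integral>thn. (?G (insert x S) thn - ?G S thn) - (?G (insert x T) thn - ?G T thn) \<partial>?P)"
  proof (rule Bochner_Integration.integral_nonneg)
    fix thn
    have "(\<Sum>v\<in>V. gval V wp wn N0 thn v (insert x T) - gval V wp wn N0 thn v T)
       \<le> (\<Sum>v\<in>V. gval V wp wn N0 thn v (insert x S) - gval V wp wn N0 thn v S)"
      by (intro sum_mono gval_submod wp_nonneg wp_sum) (use a in auto)
    then show "0 \<le> (?G (insert x S) thn - ?G S thn) - (?G (insert x T) thn - ?G T thn)"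
      by (simp add: sum_subtractf)
  qed
  also have "\<dots> = (sigma_NIR V wp wn N0 (insert x S) - sigma_NIR V wp wn N0 S)
      - (sigma_NIR V wp wn N0 (insert x T) - sigma_NIR V wp wn N0 T)"
    unfolding se1[OF V(1)] se1[OF V(2)] se1[OF V(3)] se1[OF V(4)]
    using se2[OF V(1)] se2[OF V(2)] se2[OF V(3)] se2[OF V(4)]
    by (simp add: Bochner_Integration.integral_diff)
  finally show "sigma_NIR V wp wn N0 (insert x S) - sigma_NIR V wp wn N0 S
              \<ge> sigma_NIR V wp wn N0 (insert x T) - sigma_NIR V wp wn N0 T" by simp
next
  have "IBS V wp wn N0 thp thn {} = {}" for thp thn unfolding IBS_def by auto
  then show "sigma_NIR V wp wn N0 {} = 0" unfolding sigma_NIR_def by simp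
qed


end
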